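(* Let $(X,d)$ be a metric space with a distinguished point $o$, $p>0$, $\mathcal{F}$ a $p$-admissible sheaf of metrics on $X$, and $\rho_+:\mathbf{R}_+\to\mathbf{R}_+$ an increasing unbounded function. Let $\mathcal{A}$ be the set of finite subsets of $X$ containing $o$. Assume there is a function $T:\mathbf{R}_+\to\mathbf{R}_+$ such that for every $U\in\mathcal{A}$ and every $K>0$ there exists $\sigma\in\mathcal{F}(U)$ with $\sigma(x,y)\le\rho_+(d(x,y))$ for all $x,y\in U$ and $\sigma(x,y)\ge K$ for all $(x,y)\in\Delta_{T(K)}(U)$. Then $\mathcal{F}(X)$ contains a coarse metric.
   Context: A (pseudo-)metric on a set $\Omega$ is a function $\sigma:\Omega^2\to\mathbf{R}_+$ with $\sigma(x,y)=\sigma(y,x)$, $\sigma(x,y)\le\sigma(x,z)+\sigma(z,y)$, $\sigma(x,x)=0$. A sheaf of metrics $\mathcal{F}$ on a set $X$ assigns to each $\Omega\subseteq X$ a set $\mathcal{F}(\Omega)$ of metrics on $\Omega$, such that the restriction of any element of $\mathcal{F}(\Omega)$ to $\Omega'\subseteq\Omega$ belongs to $\mathcal{F}(\Omega')$. For $p>0$, $\mathcal{F}$ is $p$-admissible if for every $\Omega\subseteq X$: (i) $\{\sigma^p:\sigma\in\mathcal{F}(\Omega)\}$ is a convex cone of functions on $\Omega^2$ (for $\sigma_1,\sigma_2\in\mathcal{F}(\Omega)$ and $s,t\ge0$ there is $\sigma\in\mathcal{F}(\Omega)$ with $\sigma^p=s\sigma_1^p+t\sigma_2^p$); (ii) $\mathcal{F}(\Omega)$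 is closed under pointwise convergence; (iii) for every family $(U_i)$ of finite subsets of $\Omega$ with union $\Omega$, directed under inclusion, and every family $\sigma_i\in\mathcal{F}(U_i)$ with $\sigma_i=\sigma_j$ on $U_i\cap U_j$, there is $\sigma\in\mathcal{F}(\Omega)$ restricting to $\sigma_i$ on each $U_i$. A metric $\sigma$ on $X$ is coarse if there exist increasing unbounded $\rho_-,\rho_+':\mathbf{R}_+\to\mathbf{R}_+$ with $\rho_-(d(x,y))\le\sigma(x,y)\le\rho_+'(d(x,y))$ for all $x,y$. $\Delta_r(U)=\{(x,y)\in U^2:d(x,y)\ge r\}$. *)

theory Defs
  imports "HOL-Analysis.Analysis"
begin

text \<open>Metrics on a subset \<open>\<Omega>\<close> are represented by functions on the whole type;
  only their values on \<open>\<Omega> \<times> \<Omega>\<close> matter.\<close>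

definition pmetric_on :: "'a set \<Rightarrow> ('a \<Rightarrow> 'a \<Rightarrow> real) \<Rightarrow> bool" where
  "pmetric_on \<Omega> \<sigma> \<longleftrightarrow>
     (\<forall>x\<in>\<Omega>. \<forall>y\<in>\<Omega>. 0 \<le> \<sigma> x y) \<and>
     (\<forall>x\<in>\<Omega>. \<forall>y\<in>\<Omega>. \<sigma> x y = \<sigma> y x) \<and>
     (\<forall>x\<in>\<Omega>. \<forall>y\<in>\<Omega>. \<forall>z\<in>\<Omega>. \<sigma> x y \<le> \<sigma> x z + \<sigma> z y) \<and>
     (\<forall>x\<in>\<Omega>. \<sigma> x x = 0)"

definition in_sheaf :: "('a set \<Rightarrow> ('a \<Rightarrow> 'a \<Rightarrow> real) set) \<Rightarrow> 'a set \<Rightarrow> ('a \<Rightarrow> 'a \<Rightarrow> real) \<Rightarrow> bool" where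
  "in_sheaf F \<Omega> \<sigma> \<longleftrightarrow> (\<exists>\<tau>\<in>F \<Omega>. \<forall>x\<in>\<Omega>. \<forall>y\<in>\<Omega>. \<tau> x y = \<sigma> x y)"

definition sheaf_of_metrics :: "'a set \<Rightarrow> ('a set \<Rightarrow> ('a \<Rightarrow> 'a \<Rightarrow> real) set) \<Rightarrow> bool" where
  "sheaf_of_metrics X F \<longleftrightarrow>
     (\<forall>\<Omega>. \<Omega> \<subseteq> X \<longrightarrow> (\<forall>\<sigma>\<in>F \<Omega>. pmetric_on \<Omega> \<sigma>)) \<and>
     (\<forall>\<Omega> \<Omega>'. \<Omega> \<subseteq> X \<longrightarrow> \<Omega>' \<subseteq> \<Omega> \<longrightarrow> (\<forall>\<sigma>\<in>F \<Omega>. in_sheaf F \<Omega>' \<sigma>))"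

definition p_admissible :: "real \<Rightarrow> 'a set \<Rightarrow> ('a set \<Rightarrow> ('a \<Rightarrow> 'a \<Rightarrow> real) set) \<Rightarrow> bool" where
  "p_admissible p X F \<longleftrightarrow> sheaf_of_metrics X F \<and>
     (\<forall>\<Omega>. \<Omega> \<subseteq> X \<longrightarrow>
       \<comment> \<open>(i) the p-th powers form a convex cone\<close>
       (\<forall>\<sigma>1\<in>F \<Omega>. \<forall>\<sigma>2\<in>F \<Omega>. \<forall>s t::real. s \<ge> 0 \<longrightarrow> t \<ge> 0 \<longrightarrow>
          (\<exists>\<sigma>\<in>F \<Omega>. \<forall>x\<in>\<Omega>. \<forall>y\<in>\<Omega>.
             \<sigma> x y powr p = s * \<sigma>1 x y powr p + t * \<sigma>2 x y powr p)) \<and>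
       \<comment> \<open>(ii) closed under pointwise convergence\<close>
       (\<forall>(S :: nat \<Rightarrow> 'a \<Rightarrow> 'a \<Rightarrow> real) \<sigma>. (\<forall>n. S n \<in> F \<Omega>) \<longrightarrow>
          (\<forall>x\<in>\<Omega>. \<forall>y\<in>\<Omega>. (\<lambda>n. S n x y) \<longlonglongrightarrow> \<sigma> x y) \<longrightarrow> in_sheaf F \<Omega> \<sigma>) \<and>
       \<comment> \<open>(iii) gluing along directed families of finite subsets\<close>
       (\<forall>(\<U> :: 'a set set) (S :: 'a set \<Rightarrow> 'a \<Rightarrow> 'a \<Rightarrow> real).
          \<U> \<noteq> {} \<longrightarrow> (\<forall>U\<in>\<U>. finite U) \<longrightarrow> \<Union>\<U> = \<Omega> \<longrightarrow>
          (\<forall>U\<in>\<U>. \<forall>V\<in>\<U>. \<exists>W\<in>\<U>. U \<union> V \<subseteq> W) \<longrightarrow>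
          (\<forall>U\<in>\<U>. S U \<in> F U) \<longrightarrow>
          (\<forall>U\<in>\<U>. \<forall>V\<in>\<U>. \<forall>x\<in>U \<inter> V. \<forall>y\<in>U \<inter> V. S U x y = S V x y) \<longrightarrow>
          (\<exists>\<sigma>\<in>F \<Omega>. \<forall>U\<in>\<U>. \<forall>x\<in>U. \<forall>y\<in>U. \<sigma> x y = S U x y)))"

definition incr_unbounded :: "(real \<Rightarrow> real) \<Rightarrow> bool" where
  "incr_unbounded f \<longleftrightarrow> mono_on {0..} f \<and> (\<forall>t\<ge>0. 0 \<le> f t) \<and> (\<forall>M. \<exists>t\<ge>0. M < f t)"

definition coarse_metric :: "'a set \<Rightarrow> ('a \<Rightarrow> 'a \<Rightarrow> real) \<Rightarrow> ('a \<Rightarrow> 'a \<Rightarrow> real) \<Rightarrow> bool" where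
  "coarse_metric X d \<sigma> \<longleftrightarrow>
     (\<exists>\<rho>m \<rho>p. incr_unbounded \<rho>m \<and> incr_unbounded \<rho>p \<and>
        (\<forall>x\<in>X. \<forall>y\<in>X. \<rho>m (d x y) \<le> \<sigma> x y \<and> \<sigma> x y \<le> \<rho>p (d x y)))"

end

theory Submission
  imports Defs
begin


definition Kf :: "real \<Rightarrow> nat \<Rightarrow> real" where "Kf p n = 2 powr ((real n + 1) / p)"
definition Aset :: "(real \<Rightarrow> real) \<Rightarrow> real \<Rightarrow> real \<Rightarrow> nat set" where
  "Aset T p t = {n. n \<le> nat \<lfloor>t\<rfloor> \<and> T (Kf p n) \<le> t}"
definition rhom :: "(real \<Rightarrow> real) \<Rightarrow> real \<Rightarrow> real \<Rightarrow> real" where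
  "rhom T p t = real (card (Aset T p t)) powr (1 / p)"

lemma Kf_pos: "Kf p n > 0" by (simp add: Kf_def)

lemma Kf_powr: "p > 0 \<Longrightarrow> Kf p n powr p = 2 ^ (Suc n)"
proof -
  assume p: "p > 0"
  have "Kf p n powr p = 2 powr (real n + 1)" using p by (simp add: Kf_def powr_powr)
  also have "\<dots> = 2 ^ Suc n" by (metis of_nat_Suc add.commute powr_realpow zero_less_numeral)
  finally show ?thesis .
qed

lemma Aset_finite: "finite (Aset T p t)"
  by (rule finite_subset[of _ "{..nat \<lfloor>t\<rfloor>}"]) (auto simp: Aset_def)

lemma geom_le: "(\<Sum>n\<le>N. (1/2::real)^(Suc n)) \<le> 1"
proof -
  have "(\<Sum>n\<le>N. (1/2::real)^(Suc n)) = 1 - (1/2)^(Suc N)"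
    by (induction N) (auto simp: power_Suc)
  then show ?thesis by simp
qed

lemma rhom_iu: assumes p: "p > 0" shows "incr_unbounded (rhom T p)"
  unfolding incr_unbounded_def
proof (intro conjI allI impI)
  show "mono_on {0..} (rhom T p)"
  proof (rule mono_onI)
    fix s t :: real assume "s \<in> {0..}" "t \<in> {0..}" "s \<le> t"
    then have "Aset T p s \<subseteq> Aset T p t"
      by (auto simp: Aset_def intro: order_trans nat_mono floor_mono)
    then have "card (Aset T p s) \<le> card (Aset T p t)" by (simp add: card_mono Aset_finite)
    then show "rhom T p s \<le> rhom T p t" unfolding rhom_def
      using p by (intro powr_mono2) auto
  qed
  show "0 \<le> rhom T p t" for t unfolding rhom_def by (rule powr_ge_zero)
  fix M :: real
  define c where "c = max 1 M"
  define n where "n = nat \<lceil>c powr p\<rceil>"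
  define t where "t = max (real n) (Max ((\<lambda>k. T (Kf p k)) ` {..n}))"
  have "{..n} \<subseteq> Aset T p t"
  proof
    fix k assume k: "k \<in> {..n}"
    have "real n \<le> t" by (simp add: t_def)
    then have "n \<le> nat \<lfloor>t\<rfloor>" by (simp add: le_nat_floor)
    moreover have "T (Kf p k) \<le> t" unfolding t_def using k
      by (intro max.coboundedI2 Max_ge) auto
    ultimately show "k \<in> Aset T p t" using k by (auto simp: Aset_def)
  qed
  then have "card {..n} \<le> card (Aset T p t)" by (metis card_mono Aset_finite)
  then have cn: "real n + 1 \<le> real (card (Aset T p t))" by simp
  have "c powr p < real n + 1" unfolding n_def by linarith
  then have "(c powr p) powr (1/p) < (real n + 1) powr (1/p)"
    using p by (intro powr_less_mono2) auto
  also have "\<dots> \<le> rhom T p t" unfolding rhom_def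
    by (rule powr_mono2) (use cn p in auto)
  finally have lt: "(c powr p) powr (1/p) < rhom T p t" .
  have "(c powr p) powr (1/p) = c powr (p * (1/p))" by (rule powr_powr)
  also have "\<dots> = c" using p by (simp add: c_def)
  finally have "c < rhom T p t" using lt by simp
  moreover have "0 \<le> t" by (simp add: t_def)
  moreover have "M \<le> c" by (simp add: c_def)
  ultimately have "0 \<le> t" "M < rhom T p t" by (meson le_less_trans)+
  then show "\<exists>t\<ge>0. M < rhom T p t" by blast
qed

lemma adm_parts:
  assumes "p_admissible p X F" "\<Omega> \<subseteq> X"
  shows "(\<forall>\<sigma>1\<in>F \<Omega>. \<forall>\<sigma>2\<in>F \<Omega>. \<forall>s t::real. s \<ge> 0 \<longrightarrow> t \<ge> 0 \<longrightarrow>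
          (\<exists>\<sigma>\<in>F \<Omega>. \<forall>x\<in>\<Omega>. \<forall>y\<in>\<Omega>.
             \<sigma> x y powr p = s * \<sigma>1 x y powr p + t * \<sigma>2 x y powr p)) \<and>
       (\<forall>(S :: nat \<Rightarrow> 'a \<Rightarrow> 'a \<Rightarrow> real) \<sigma>. (\<forall>n. S n \<in> F \<Omega>) \<longrightarrow>
          (\<forall>x\<in>\<Omega>. \<forall>y\<in>\<Omega>. (\<lambda>n. S n x y) \<longlonglongrightarrow> \<sigma> x y) \<longrightarrow> in_sheaf F \<Omega> \<sigma>) \<and>
       (\<forall>(\<U> :: 'a set set) (S :: 'a set \<Rightarrow> 'a \<Rightarrow> 'a \<Rightarrow> real).
          \<U> \<noteq> {} \<longrightarrow> (\<forall>U\<in>\<U>. finite U) \<longrightarrow> \<Union>\<U> = \<Omega> \<longrightarrow>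
          (\<forall>U\<in>\<U>. \<forall>V\<in>\<U>. \<exists>W\<in>\<U>. U \<union> V \<subseteq> W) \<longrightarrow>
          (\<forall>U\<in>\<U>. S U \<in> F U) \<longrightarrow>
          (\<forall>U\<in>\<U>. \<forall>V\<in>\<U>. \<forall>x\<in>U \<inter> V. \<forall>y\<in>U \<inter> V. S U x y = S V x y) \<longrightarrow>
          (\<exists>\<sigma>\<in>F \<Omega>. \<forall>U\<in>\<U>. \<forall>x\<in>U. \<forall>y\<in>U. \<sigma> x y = S U x y))"
  using mp[OF spec[OF conjunct2[OF assms(1)[unfolded p_admissible_def]], of \<Omega>] assms(2)] .

lemma cone:
  assumes "p_admissible p X F" "\<Omega> \<subseteq> X" "s1 \<in> F \<Omega>" "s2 \<in> F \<Omega>" "s \<ge> 0" "t \<ge> 0"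
  shows "\<exists>\<sigma>\<in>F \<Omega>. \<forall>x\<in>\<Omega>. \<forall>y\<in>\<Omega>. \<sigma> x y powr p = s * s1 x y powr p + t * s2 x y powr p"
  using conjunct1[OF adm_parts[OF assms(1,2)], rule_format, OF assms(3-6)] .

lemma combo:
  assumes adm: "p_admissible p X F" and U: "U \<subseteq> X" and sg: "\<And>n. sg n \<in> F U"
    and w: "\<And>n. w n \<ge> (0::real)"
  fixes N :: nat
  shows "\<exists>\<phi>\<in>F U. \<forall>x\<in>U. \<forall>y\<in>U. \<phi> x y powr p = (\<Sum>n\<le>N. w n * sg n x y powr p)"
proof (induction N)
  case 0
  obtain \<phi> where ph: "\<phi> \<in> F U" "\<forall>x\<in>U. \<forall>y\<in>U. \<phi> x y powr p = w 0 * sg 0 x y powr p + 0 * sg 0 x y powr p"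
    using cone[OF adm U sg sg w order.refl] by blast
  show ?case
  proof (rule bexI[OF _ ph(1)])
    show "\<forall>x\<in>U. \<forall>y\<in>U. \<phi> x y powr p = (\<Sum>n\<le>0. w n * sg n x y powr p)"
      using ph(2) by simp
  qed
next
  case (Suc N)
  then obtain \<phi> where \<phi>: "\<phi> \<in> F U" "\<forall>x\<in>U. \<forall>y\<in>U. \<phi> x y powr p = (\<Sum>n\<le>N. w n * sg n x y powr p)"
    by blast
  obtain \<psi> where ps: "\<psi> \<in> F U" "\<forall>x\<in>U. \<forall>y\<in>U. \<psi> x y powr p = 1 * \<phi> x y powr p + w (Suc N) * sg (Suc N) x y powr p"
    using cone[OF adm U \<phi>(1) sg zero_le_one w] by blast
  show ?case
  proof (rule bexI[OF _ ps(1)])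
    show "\<forall>x\<in>U. \<forall>y\<in>U. \<psi> x y powr p = (\<Sum>n\<le>Suc N. w n * sg n x y powr p)"
      using ps(2) \<phi>(2) by simp
  qed
qed

lemma sheaf_parts:
  assumes "p_admissible p X F"
  shows "(\<forall>\<Omega>. \<Omega> \<subseteq> X \<longrightarrow> (\<forall>\<sigma>\<in>F \<Omega>. pmetric_on \<Omega> \<sigma>)) \<and>
     (\<forall>\<Omega> \<Omega>'. \<Omega> \<subseteq> X \<longrightarrow> \<Omega>' \<subseteq> \<Omega> \<longrightarrow> (\<forall>\<sigma>\<in>F \<Omega>. in_sheaf F \<Omega>' \<sigma>))"
  using conjunct1[OF assms[unfolded p_admissible_def], unfolded sheaf_of_metrics_def] .

lemma restr:
  assumes adm: "p_admissible p X F" and "V \<subseteq> X" "U \<subseteq> V" "in_sheaf F V h"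
  shows "in_sheaf F U h"
proof -
  obtain t where t: "t \<in> F V" "\<forall>x\<in>V. \<forall>y\<in>V. t x y = h x y" using assms(4) unfolding in_sheaf_def by blast
  have "in_sheaf F U t" using conjunct2[OF sheaf_parts[OF adm]] assms(2,3) t(1) by blast
  then obtain t' where "t' \<in> F U" "\<forall>x\<in>U. \<forall>y\<in>U. t' x y = t x y" unfolding in_sheaf_def by blast
  then show ?thesis using t(2) assms(3) unfolding in_sheaf_def by (metis subsetD)
qed

lemma pm: "p_admissible p X F \<Longrightarrow> U \<subseteq> X \<Longrightarrow> s \<in> F U \<Longrightarrow> pmetric_on U s"
  using sheaf_parts by blast



lemma powr_inv: "0 \<le> (a::real) \<Longrightarrow> p > 0 \<Longrightarrow> (a powr p) powr (1/p) = a"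
  by (simp add: powr_powr)

lemma step1:
  fixes X :: "'a set" and d :: "'a \<Rightarrow> 'a \<Rightarrow> real" and x0 :: 'a and p :: real
    and F :: "'a set \<Rightarrow> ('a \<Rightarrow> 'a \<Rightarrow> real) set"
    and \<rho>p :: "real \<Rightarrow> real" and T :: "real \<Rightarrow> real"
  assumes adm: "p_admissible p X F" and p: "p > 0" and ms: "Metric_space X d" and rp: "incr_unbounded \<rho>p"
    and hyp: "\<forall>U. finite U \<and> U \<subseteq> X \<and> x0 \<in> U \<longrightarrow>
           (\<forall>K>0. \<exists>\<sigma>\<in>F U. (\<forall>x\<in>U. \<forall>y\<in>U. \<sigma> x y \<le> \<rho>p (d x y)) \<and>
                            (\<forall>x\<in>U. \<forall>y\<in>U. d x y \<ge> T K \<longrightarrow> \<sigma> x y \<ge> K))"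
    and U: "finite U" "U \<subseteq> X" "x0 \<in> U"
  shows "\<exists>\<sigma>\<in>F U. \<forall>x\<in>U. \<forall>y\<in>U. rhom T p (d x y) \<le> \<sigma> x y \<and> \<sigma> x y \<le> \<rho>p (d x y)"
proof -
  have hU: "\<forall>K>0. \<exists>\<sigma>\<in>F U. (\<forall>x\<in>U. \<forall>y\<in>U. \<sigma> x y \<le> \<rho>p (d x y)) \<and>
                            (\<forall>x\<in>U. \<forall>y\<in>U. d x y \<ge> T K \<longrightarrow> \<sigma> x y \<ge> K)"
    using mp[OF spec[OF hyp, of U]] U by blast
  have "\<forall>n. \<exists>\<sigma>. \<sigma> \<in> F U \<and> (\<forall>x\<in>U. \<forall>y\<in>U. \<sigma> x y \<le> \<rho>p (d x y)) \<and>
              (\<forall>x\<in>U. \<forall>y\<in>U. d x y \<ge> T (Kf p n) \<longrightarrow> \<sigma> x y \<ge> Kf p n)"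
  proof
    fix n
    show "\<exists>\<sigma>. \<sigma> \<in> F U \<and> (\<forall>x\<in>U. \<forall>y\<in>U. \<sigma> x y \<le> \<rho>p (d x y)) \<and>
              (\<forall>x\<in>U. \<forall>y\<in>U. d x y \<ge> T (Kf p n) \<longrightarrow> \<sigma> x y \<ge> Kf p n)"
      using mp[OF spec[OF hU, of "Kf p n"] Kf_pos] by blast
  qed
  from choice[OF this] obtain sg where sgall: "\<forall>n. sg n \<in> F U \<and> (\<forall>x\<in>U. \<forall>y\<in>U. sg n x y \<le> \<rho>p (d x y)) \<and>
              (\<forall>x\<in>U. \<forall>y\<in>U. d x y \<ge> T (Kf p n) \<longrightarrow> sg n x y \<ge> Kf p n)" by blast
  have sg1: "\<And>n. sg n \<in> F U" using sgall by blast
  have sg2: "\<And>n x y. x\<in>U \<Longrightarrow> y\<in>U \<Longrightarrow> sg n x y \<le> \<rho>p (d x y)" using sgall by blast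
  have sg3: "\<And>n x y. x\<in>U \<Longrightarrow> y\<in>U \<Longrightarrow> d x y \<ge> T (Kf p n) \<Longrightarrow> sg n x y \<ge> Kf p n" using sgall by blast
  define w :: "nat \<Rightarrow> real" where "w n = (1/2)^(Suc n)" for n
  have wnn: "\<And>n. w n \<ge> 0" by (simp add: w_def)
  define D where "D = Max ((\<lambda>(x,y). d x y) ` (U \<times> U))"
  define N where "N = nat \<lfloor>D\<rfloor>"
  obtain \<phi> where \<phi>: "\<phi> \<in> F U" "\<forall>x\<in>U. \<forall>y\<in>U. \<phi> x y powr p = (\<Sum>n\<le>N. w n * sg n x y powr p)"
    using combo[OF adm U(2), where sg=sg and w=w and N=N] sg1 wnn by blast
  show ?thesis
  proof (rule bexI[OF _ \<phi>(1)], intro ballI conjI)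
    fix x y assume x: "x \<in> U" and y: "y \<in> U"
    have sgnn: "\<And>n. 0 \<le> sg n x y" using pm[OF adm U(2) sg1] x y unfolding pmetric_on_def by blast
    have \<phi>nn: "0 \<le> \<phi> x y" using pm[OF adm U(2) \<phi>(1)] x y unfolding pmetric_on_def by blast
    have dnn: "0 \<le> d x y" using Metric_space.nonneg[OF ms] .
    have rnn: "0 \<le> \<rho>p (d x y)" using rp dnn unfolding incr_unbounded_def by blast
    have Sdef: "\<phi> x y powr p = (\<Sum>n\<le>N. w n * sg n x y powr p)" using \<phi>(2) x y by blast
    have "(\<Sum>n\<le>N. w n * sg n x y powr p) \<le> (\<Sum>n\<le>N. w n * \<rho>p (d x y) powr p)"
    proof (rule sum_mono)
      fix n show "w n * sg n x y powr p \<le> w n * \<rho>p (d x y) powr p"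
        using p sgnn[of n] sg2[OF x y, of n] wnn[of n] by (intro mult_left_mono powr_mono2) auto
    qed
    also have "\<dots> = (\<Sum>n\<le>N. w n) * \<rho>p (d x y) powr p" by (simp add: sum_distrib_right)
    also have "\<dots> \<le> 1 * \<rho>p (d x y) powr p"
      using geom_le[of N] by (intro mult_right_mono) (auto simp: w_def)
    finally have up: "\<phi> x y powr p \<le> \<rho>p (d x y) powr p" using Sdef by simp
    have "(\<phi> x y powr p) powr (1/p) \<le> (\<rho>p (d x y) powr p) powr (1/p)"
      using up p \<phi>nn by (rule_tac powr_mono2) auto
    then show "\<phi> x y \<le> \<rho>p (d x y)" by (simp only: powr_inv[OF \<phi>nn p] powr_inv[OF rnn p])
    have dD: "d x y \<le> D" unfolding D_def using x y U(1)
      by (intro Max_ge) (auto intro!: image_eqI[of _ _ "(x,y)"])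
    have sub: "Aset T p (d x y) \<subseteq> {..N}" unfolding Aset_def N_def using dD
      by (auto intro: order_trans nat_mono floor_mono)
    have w1: "\<And>n. w n * Kf p n powr p = 1" by (simp add: Kf_powr[OF p] w_def power_one_over)
    have "real (card (Aset T p (d x y))) = (\<Sum>n\<in>Aset T p (d x y). w n * Kf p n powr p)"
      by (simp add: w1)
    also have "\<dots> \<le> (\<Sum>n\<in>Aset T p (d x y). w n * sg n x y powr p)"
    proof (rule sum_mono)
      fix n assume "n \<in> Aset T p (d x y)"
      then have "T (Kf p n) \<le> d x y" by (simp add: Aset_def)
      then have "Kf p n \<le> sg n x y" using sg3 x y by blast
      then show "w n * Kf p n powr p \<le> w n * sg n x y powr p"
        using p Kf_pos[of p n] wnn[of n] by (intro mult_left_mono powr_mono2) auto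
    qed
    also have "\<dots> \<le> (\<Sum>n\<le>N. w n * sg n x y powr p)"
      by (rule sum_mono2) (use sub wnn in auto)
    finally have lo: "real (card (Aset T p (d x y))) \<le> \<phi> x y powr p" using Sdef by simp
    have "real (card (Aset T p (d x y))) powr (1/p) \<le> (\<phi> x y powr p) powr (1/p)"
      using lo p by (intro powr_mono2) auto
    then show "rhom T p (d x y) \<le> \<phi> x y" unfolding rhom_def by (simp only: powr_inv[OF \<phi>nn p])
  qed
qed



lemma box_compact: "compact (PiE UNIV (\<lambda>i. {0..(b i::real)}))"
proof -
  have "compactin (product_topology (\<lambda>i. euclidean) UNIV) (PiE UNIV (\<lambda>i. {0..(b i::real)}))"
    by (simp add: compactin_PiE)
  then show ?thesis by (simp add: euclidean_product_topology)
qed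

lemma open_near: "finite I \<Longrightarrow> open {f::'i\<Rightarrow>real. \<forall>i\<in>I. f i \<in> ball (g i) e}"
  using product_topology_basis'[of I "\<lambda>i. ball (g i) e" id] by simp

lemma closed_coord: "closed {f::'i\<Rightarrow>real. c \<le> f i}"
  by (intro closed_Collect_le continuous_on_const continuous_on_product_coordinates)

theorem mainTheorem7:
  fixes X :: "'a set" and d :: "'a \<Rightarrow> 'a \<Rightarrow> real" and x0 :: 'a and p :: real
    and F :: "'a set \<Rightarrow> ('a \<Rightarrow> 'a \<Rightarrow> real) set"
    and \<rho>p :: "real \<Rightarrow> real" and T :: "real \<Rightarrow> real"
  assumes "Metric_space X d"
    and "x0 \<in> X"
    and "p > 0"
    and "p_admissible p X F"
    and "incr_unbounded \<rho>p"
    and "\<forall>K\<ge>0. T K \<ge> 0"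
    and "\<forall>U. finite U \<and> U \<subseteq> X \<and> x0 \<in> U \<longrightarrow>
           (\<forall>K>0. \<exists>\<sigma>\<in>F U. (\<forall>x\<in>U. \<forall>y\<in>U. \<sigma> x y \<le> \<rho>p (d x y)) \<and>
                            (\<forall>x\<in>U. \<forall>y\<in>U. d x y \<ge> T K \<longrightarrow> \<sigma> x y \<ge> K))"
  shows "\<exists>\<sigma>\<in>F X. coarse_metric X d \<sigma>"
proof -
  note adm = assms(4)
  define I where "I = {U. finite U \<and> U \<subseteq> X \<and> x0 \<in> U}"
  define \<rho>m where "\<rho>m = rhom T p"
  have "\<forall>U\<in>I. \<exists>\<sigma>. \<sigma> \<in> F U \<and> (\<forall>x\<in>U. \<forall>y\<in>U. \<rho>m (d x y) \<le> \<sigma> x y \<and> \<sigma> x y \<le> \<rho>p (d x y))"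
  proof
    fix U assume "U \<in> I"
    then have "finite U" "U \<subseteq> X" "x0 \<in> U" by (auto simp: I_def)
    from step1[OF assms(4,3,1,5,7) this] show "\<exists>\<sigma>. \<sigma> \<in> F U \<and> (\<forall>x\<in>U. \<forall>y\<in>U. \<rho>m (d x y) \<le> \<sigma> x y \<and> \<sigma> x y \<le> \<rho>p (d x y))"
      unfolding \<rho>m_def by blast
  qed
  from bchoice[OF this] obtain sg where sg: "\<forall>U\<in>I. sg U \<in> F U \<and> (\<forall>x\<in>U. \<forall>y\<in>U. \<rho>m (d x y) \<le> sg U x y \<and> sg U x y \<le> \<rho>p (d x y))"
    by blast
  define b :: "'a\<times>'a \<Rightarrow> real" where "b i = (if fst i \<in> X \<and> snd i \<in> X then \<rho>p (d (fst i) (snd i)) else 0)" for i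
  define Box where "Box = PiE UNIV (\<lambda>i. {0..b i})"
  define g where "g V = (\<lambda>i::'a\<times>'a. if fst i \<in> V \<and> snd i \<in> V then sg V (fst i) (snd i) else 0)" for V
  define S where "S U = {h \<in> Box. \<exists>V\<in>I. U \<subseteq> V \<and> in_sheaf F V (curry h) \<and> (\<forall>x\<in>V. \<forall>y\<in>V. \<rho>m (d x y) \<le> h (x,y))}" for U
  have rpnn: "\<And>t. 0 \<le> t \<Longrightarrow> 0 \<le> \<rho>p t" using assms(5) unfolding incr_unbounded_def by blast
  have dnn: "\<And>x y. 0 \<le> d x y" using Metric_space.nonneg[OF assms(1)] .
  have bnn: "\<And>i. 0 \<le> b i" unfolding b_def using rpnn dnn by simp
  have inBox: "\<And>h. h \<in> Box \<longleftrightarrow> (\<forall>i. h i \<in> {0..b i})" unfolding Box_def by (simp add: PiE_iff)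
  have gS: "g V \<in> S U" if V: "V \<in> I" "U \<subseteq> V" for U V
  proof -
    have VX: "V \<subseteq> X" using V I_def by auto
    have sgV: "sg V \<in> F V" and bnd: "\<forall>x\<in>V. \<forall>y\<in>V. \<rho>m (d x y) \<le> sg V x y \<and> sg V x y \<le> \<rho>p (d x y)"
      using sg V by blast+
    have nn: "\<forall>x\<in>V. \<forall>y\<in>V. 0 \<le> sg V x y" using pm[OF adm VX sgV] unfolding pmetric_on_def by blast
    have "\<forall>i. g V i \<in> {0..b i}"
    proof
      fix i :: "'a\<times>'a"
      obtain x y where i: "i = (x,y)" by fastforce
      show "g V i \<in> {0..b i}"
      proof (cases "x \<in> V \<and> y \<in> V")
        case True
        then have "x \<in> X" "y \<in> X" using VX by auto
        then show ?thesis using True nn bnd unfolding i g_def b_def by auto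
      next
        case False
        then show ?thesis using bnn[of i] unfolding i g_def by auto
      qed
    qed
    then have "g V \<in> Box" using inBox by blast
    moreover have "in_sheaf F V (curry (g V))" unfolding in_sheaf_def
      by (rule bexI[OF _ sgV]) (simp add: g_def)
    moreover have "\<forall>x\<in>V. \<forall>y\<in>V. \<rho>m (d x y) \<le> g V (x,y)" using bnd by (simp add: g_def)
    ultimately show "g V \<in> S U" unfolding S_def using V by blast
  qed
  have cpt: "compact Box" unfolding Box_def by (rule box_compact)
  have "Box \<inter> (\<Inter>U\<in>I. closure (S U)) \<noteq> {}"
  proof (rule compact_imp_fip_image[OF cpt])
    show "\<And>U. U \<in> I \<Longrightarrow> closed (closure (S U))" by simp
    fix J assume J: "finite J" "J \<subseteq> I"
    define W where "W = insert x0 (\<Union>J)"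
    have WI: "W \<in> I" using J assms(2) unfolding W_def I_def by auto
    have "g W \<in> Box" using gS[OF WI, of "{}"] unfolding S_def by blast
    moreover have "g W \<in> closure (S U)" if "U \<in> J" for U
      using gS[OF WI, of U] that closure_subset unfolding W_def by blast
    ultimately show "Box \<inter> (\<Inter>U\<in>J. closure (S U)) \<noteq> {}" by blast
  qed
  then obtain \<tau> where \<tau>: "\<tau> \<in> Box" "\<And>U. U \<in> I \<Longrightarrow> \<tau> \<in> closure (S U)" by blast
  have \<tau>up: "\<tau> (x,y) \<le> \<rho>p (d x y)" if "x \<in> X" "y \<in> X" for x y
  proof -
    have "\<tau> (x,y) \<in> {0..b (x,y)}" using \<tau>(1) unfolding inBox by blast
    moreover have "b (x,y) = \<rho>p (d x y)" using that by (simp add: b_def)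
    ultimately show ?thesis by simp
  qed
  have \<tau>lo: "\<rho>m (d x y) \<le> \<tau> (x,y)" if xy: "x \<in> X" "y \<in> X" for x y
  proof -
    have UI: "{x0,x,y} \<in> I" using xy assms(2) by (auto simp: I_def)
    have "S {x0,x,y} \<subseteq> {h. \<rho>m (d x y) \<le> h (x,y)}" unfolding S_def by auto
    then have "closure (S {x0,x,y}) \<subseteq> {h. \<rho>m (d x y) \<le> h (x,y)}"
      by (rule closure_minimal) (rule closed_coord)
    then show "\<rho>m (d x y) \<le> \<tau> (x,y)" using \<tau>(2)[OF UI] by blast
  qed
  have \<tau>sh: "in_sheaf F U (curry \<tau>)" if UI: "U \<in> I" for U
  proof -
    have UX: "U \<subseteq> X" and Uf: "finite U" using UI I_def by auto
    have "\<forall>n. \<exists>h. h \<in> F U \<and> (\<forall>x\<in>U. \<forall>y\<in>U. dist (h x y) (\<tau> (x,y)) < inverse (real (Suc n)))"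
    proof
      fix n
      define Onb where "Onb = {f::'a\<times>'a\<Rightarrow>real. \<forall>i\<in>U\<times>U. f i \<in> ball (\<tau> i) (inverse (real (Suc n)))}"
      have "open Onb" unfolding Onb_def by (rule open_near) (use Uf in auto)
      moreover have "\<tau> \<in> Onb" unfolding Onb_def by auto
      ultimately have "S U \<inter> Onb \<noteq> {}" using \<tau>(2)[OF UI] unfolding closure_iff_nhds_not_empty by blast
      then obtain h where h: "h \<in> S U" "h \<in> Onb" by blast
      then obtain V where V: "V \<in> I" "U \<subseteq> V" "in_sheaf F V (curry h)" unfolding S_def by blast
      have "V \<subseteq> X" using V(1) I_def by auto
      then have "in_sheaf F U (curry h)" using restr[OF adm _ V(2) V(3)] by blast
      then obtain h' where h': "h' \<in> F U" "\<forall>x\<in>U. \<forall>y\<in>U. h' x y = curry h x y" unfolding in_sheaf_def by blast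
      show "\<exists>h. h \<in> F U \<and> (\<forall>x\<in>U. \<forall>y\<in>U. dist (h x y) (\<tau> (x,y)) < inverse (real (Suc n)))"
      proof (intro exI conjI ballI)
        show "h' \<in> F U" by fact
        fix x y assume "x \<in> U" "y \<in> U"
        then have "h (x,y) \<in> ball (\<tau> (x,y)) (inverse (real (Suc n)))" using h(2) unfolding Onb_def by blast
        then show "dist (h' x y) (\<tau> (x,y)) < inverse (real (Suc n))"
          using h' \<open>x \<in> U\<close> \<open>y \<in> U\<close> by (simp add: dist_commute)
      qed
    qed
    from choice[OF this] obtain hs where hs: "\<forall>n. hs n \<in> F U \<and> (\<forall>x\<in>U. \<forall>y\<in>U. dist (hs n x y) (\<tau> (x,y)) < inverse (real (Suc n)))"
      by blast
    have conv: "\<forall>x\<in>U. \<forall>y\<in>U. (\<lambda>n. hs n x y) \<longlonglongrightarrow> curry \<tau> x y"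
    proof (intro ballI)
      fix x y assume x: "x \<in> U" and y: "y \<in> U"
      have "(\<lambda>n. hs n x y - \<tau> (x,y)) \<longlonglongrightarrow> 0"
      proof (rule Lim_null_comparison[OF _ LIMSEQ_inverse_real_of_nat])
        show "\<forall>\<^sub>F n in sequentially. norm (hs n x y - \<tau> (x,y)) \<le> inverse (real (Suc n))"
          using hs x y by (auto simp: dist_real_def intro!: always_eventually less_imp_le)
      qed
      then show "(\<lambda>n. hs n x y) \<longlonglongrightarrow> curry \<tau> x y" by (simp add: LIM_zero_cancel)
    qed
    have hsF: "\<forall>n. hs n \<in> F U" using hs by blast
    show "in_sheaf F U (curry \<tau>)"
      using conjunct1[OF conjunct2[OF adm_parts[OF adm UX]], rule_format, of hs "curry \<tau>"] hsF conv by blast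
  qed
  have "\<forall>U\<in>I. \<exists>t. t \<in> F U \<and> (\<forall>x\<in>U. \<forall>y\<in>U. t x y = \<tau> (x,y))"
    using \<tau>sh unfolding in_sheaf_def by (simp add: Bex_def)
  from bchoice[OF this] obtain SU where SU: "\<forall>U\<in>I. SU U \<in> F U \<and> (\<forall>x\<in>U. \<forall>y\<in>U. SU U x y = \<tau> (x,y))"
    by blast
  note glue = conjunct2[OF conjunct2[OF adm_parts[OF adm order.refl]]]
  have x0I: "{x0} \<in> I" unfolding I_def using assms(2) by simp
  then have I1: "I \<noteq> {}" by blast
  have I2: "\<forall>U\<in>I. finite U" unfolding I_def by blast
  have I3: "\<Union>I = X"
  proof
    show "\<Union>I \<subseteq> X" unfolding I_def by blast
    show "X \<subseteq> \<Union>I"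
    proof
      fix x assume "x \<in> X"
      then have "{x0,x} \<in> I" using assms(2) unfolding I_def by simp
      then show "x \<in> \<Union>I" by blast
    qed
  qed
  have I4: "\<forall>U\<in>I. \<forall>V\<in>I. \<exists>W\<in>I. U \<union> V \<subseteq> W"
  proof (intro ballI)
    fix U V assume "U \<in> I" "V \<in> I"
    then have "U \<union> V \<in> I" unfolding I_def by simp
    then show "\<exists>W\<in>I. U \<union> V \<subseteq> W" by blast
  qed
  have I5: "\<forall>U\<in>I. SU U \<in> F U" using SU by blast
  have I6: "\<forall>U\<in>I. \<forall>V\<in>I. \<forall>x\<in>U \<inter> V. \<forall>y\<in>U \<inter> V. SU U x y = SU V x y"
  proof (intro ballI)
    fix U V x y assume U: "U \<in> I" and V: "V \<in> I" and x: "x \<in> U \<inter> V" and y: "y \<in> U \<inter> V"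
    have "SU U x y = \<tau> (x,y)" using SU U x y by blast
    moreover have "SU V x y = \<tau> (x,y)" using SU V x y by blast
    ultimately show "SU U x y = SU V x y" by simp
  qed
  obtain \<sigma> where \<sigma>: "\<sigma> \<in> F X" "\<forall>U\<in>I. \<forall>x\<in>U. \<forall>y\<in>U. \<sigma> x y = SU U x y"
    using mp[OF mp[OF mp[OF mp[OF mp[OF mp[OF spec[OF spec[OF glue, of I], of SU] I1] I2] I3] I4] I5] I6] by blast
  have \<sigma>eq: "\<sigma> x y = \<tau> (x,y)" if xy: "x \<in> X" "y \<in> X" for x y
  proof -
    have UI: "{x0,x,y} \<in> I" using xy assms(2) by (auto simp: I_def)
    have xU: "x \<in> {x0,x,y}" and yU: "y \<in> {x0,x,y}" by simp_all
    have "\<sigma> x y = SU {x0,x,y} x y" using \<sigma>(2) UI xU yU by blast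
    also have "\<dots> = \<tau> (x,y)" using SU UI xU yU by blast
    finally show ?thesis .
  qed
  have "coarse_metric X d \<sigma>"
    unfolding coarse_metric_def
  proof (intro exI conjI ballI)
    show "incr_unbounded \<rho>m" unfolding \<rho>m_def by (rule rhom_iu[OF assms(3)])
    show "incr_unbounded \<rho>p" by fact
    fix x y assume "x \<in> X" "y \<in> X"
    then show "\<rho>m (d x y) \<le> \<sigma> x y" "\<sigma> x y \<le> \<rho>p (d x y)"
      using \<sigma>eq[of x y] \<tau>lo[of x y] \<tau>up[of x y] by simp_all
  qed
  then show ?thesis using \<sigma>(1) by blast
qed

end
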